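(* Let $\alpha_1,\alpha_2,\alpha_3,\alpha_4\in\mathbb{C}$ be pairwise distinct. Let $f:\mathbb{Z}^4\to\mathbb{C}$ be a solution of the discrete potential KdV equation on every elementary square of $\mathbb{Z}^4$, namely $$(f_{i,j}-f)(f_i-f_j)=\alpha_i-\alpha_j\qquad\text{for all } 1\le i<j\le 4,$$ at every vertex. Assume the solution is generic, so that all denominators below are nonzero. Define $$x=\frac{f_1-f_3}{f_2-f_3},\qquad v=\frac{f_1-f_4}{f_2-f_4},$$ $$y=\frac{f_{1,3}-f_{3,4}}{f_{2,3}-f_{3,4}},\qquad u=\frac{f_{1,4}-f_{3,4}}{f_{2,4}-f_{3,4}}.$$ Thus $y$ is the shift of $v$ in direction $3$, and $u$ is the shift of $x$ in direction $4$. Then the following hold. (i) The quantities $x,y,u,v$ are invariant under the three-parameter symmetry group $G$ of the equation, which is generated by $$f\mapsto f+\varepsilon_1,\qquad f\mapsto f\,e^{\varepsilon_2(-1)^{n_1+n_2+n_3+n_4}},\qquad f\mapsto f+\varepsilon_3(-1)^{n_1+n_2+n_3+n_4}.$$ (ii) They are related by the Harrison map: $$u=yQ,\qquad v=xQ^{-1},$$ $$Q=\frac{(1-\gamma_2)+(\gamma_2-\gamma_1)x+\gamma_2(\gamma_1-1)xy}{(1-\gamma_1)+(\gamma_1-\gamma_2)y+\gamma_1(\gamma_2-1)xy},$$ where $$\gamma_1=\frac{\alpha_2-\alpha_3}{\alpha_1-\alpha_3},\qquad \gamma_2=\frac{\alpha_2-\alpha_4}{\alpha_1-\alpha_4}.$$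 (iii) The Harrison map $R(x,y;\gamma_1,\gamma_2)=(yQ,\,xQ^{-1})$ is a Yang–Baxter map, i.e. $$R^{23}(\gamma_2,\gamma_3)R^{13}(\gamma_1,\gamma_3)R^{12}(\gamma_1,\gamma_2)=R^{12}(\gamma_1,\gamma_2)R^{13}(\gamma_1,\gamma_3)R^{23}(\gamma_2,\gamma_3).$$
   Context: Notation: $f=f(n)$, $f_i=f(n+e_i)$, $f_{i,j}=f(n+e_i+e_j)$ for $n=(n_1,\dots,n_4)\in\mathbb{Z}^4$, where $e_i$ are the unit vectors. For a map $R(x,y)=(F(x,y),H(x,y))$ on $\mathbb{X}\times\mathbb{X}$, the map $R^{ij}$ on $\mathbb{X}^3$ acts as $R$ on factors $i<j$, placing $F$ in slot $i$ and $H$ in slot $j$, and as the identity on the remaining factor. It uses the parameters indicated. *)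

theory Defs
  imports Complex_Main
begin

text \<open>Lattice points of Z^4 are represented as functions nat => int supported on {1..4}.\<close>
type_synonym pt = "nat \<Rightarrow> int"

definition Z4 :: "pt set" where
  "Z4 = {n. \<forall>k. k \<notin> {1..4} \<longrightarrow> n k = 0}"

definition sh :: "pt \<Rightarrow> nat \<Rightarrow> pt" where
  "sh n i = (\<lambda>k. if k = i then n k + 1 else n k)"

definition par :: "pt \<Rightarrow> complex" where
  "par n = (if even (n 1 + n 2 + n 3 + n 4) then 1 else -1)"

definition dpKdV :: "(nat \<Rightarrow> complex) \<Rightarrow> (pt \<Rightarrow> complex) \<Rightarrow> bool" where
  "dpKdV \<alpha> f \<longleftrightarrow> (\<forall>n\<in>Z4. \<forall>i j. 1 \<le> i \<and> i < j \<and> j \<le> 4 \<longrightarrow>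
      (f (sh (sh n i) j) - f n) * (f (sh n i) - f (sh n j)) = \<alpha> i - \<alpha> j)"

definition Xq :: "(pt \<Rightarrow> complex) \<Rightarrow> pt \<Rightarrow> complex" where
  "Xq f n = (f (sh n 1) - f (sh n 3)) / (f (sh n 2) - f (sh n 3))"
definition Vq :: "(pt \<Rightarrow> complex) \<Rightarrow> pt \<Rightarrow> complex" where
  "Vq f n = (f (sh n 1) - f (sh n 4)) / (f (sh n 2) - f (sh n 4))"
definition Yq :: "(pt \<Rightarrow> complex) \<Rightarrow> pt \<Rightarrow> complex" where
  "Yq f n = (f (sh (sh n 1) 3) - f (sh (sh n 3) 4)) / (f (sh (sh n 2) 3) - f (sh (sh n 3) 4))"
definition Uq :: "(pt \<Rightarrow> complex) \<Rightarrow> pt \<Rightarrow> complex" where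
  "Uq f n = (f (sh (sh n 1) 4) - f (sh (sh n 3) 4)) / (f (sh (sh n 2) 4) - f (sh (sh n 3) 4))"

definition gen1 :: "complex \<Rightarrow> (pt \<Rightarrow> complex) \<Rightarrow> (pt \<Rightarrow> complex)" where
  "gen1 \<epsilon> f = (\<lambda>n. f n + \<epsilon>)"
definition gen2 :: "complex \<Rightarrow> (pt \<Rightarrow> complex) \<Rightarrow> (pt \<Rightarrow> complex)" where
  "gen2 \<epsilon> f = (\<lambda>n. f n * exp (\<epsilon> * par n))"
definition gen3 :: "complex \<Rightarrow> (pt \<Rightarrow> complex) \<Rightarrow> (pt \<Rightarrow> complex)" where
  "gen3 \<epsilon> f = (\<lambda>n. f n + \<epsilon> * par n)"

text \<open>The group generated (inverses of generators are generators with parameter -\<epsilon>)\<close>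
inductive_set symG :: "((pt \<Rightarrow> complex) \<Rightarrow> (pt \<Rightarrow> complex)) set" where
  symG_id: "id \<in> symG"
| symG_1: "g \<in> symG \<Longrightarrow> gen1 \<epsilon> \<circ> g \<in> symG"
| symG_2: "g \<in> symG \<Longrightarrow> gen2 \<epsilon> \<circ> g \<in> symG"
| symG_3: "g \<in> symG \<Longrightarrow> gen3 \<epsilon> \<circ> g \<in> symG"

definition Qnum :: "complex \<Rightarrow> complex \<Rightarrow> complex \<Rightarrow> complex \<Rightarrow> complex" where
  "Qnum g1 g2 x y = (1 - g2) + (g2 - g1) * x + g2 * (g1 - 1) * x * y"
definition Qden :: "complex \<Rightarrow> complex \<Rightarrow> complex \<Rightarrow> complex \<Rightarrow> complex" where
  "Qden g1 g2 x y = (1 - g1) + (g1 - g2) * y + g1 * (g2 - 1) * x * y"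
definition Qh :: "complex \<Rightarrow> complex \<Rightarrow> complex \<Rightarrow> complex \<Rightarrow> complex" where
  "Qh g1 g2 x y = Qnum g1 g2 x y / Qden g1 g2 x y"

definition Rh :: "complex \<Rightarrow> complex \<Rightarrow> complex \<times> complex \<Rightarrow> complex \<times> complex" where
  "Rh g1 g2 p = (case p of (x, y) \<Rightarrow> (y * Qh g1 g2 x y, x * inverse (Qh g1 g2 x y)))"

definition Rok :: "complex \<Rightarrow> complex \<Rightarrow> complex \<times> complex \<Rightarrow> bool" where
  "Rok g1 g2 p = (case p of (x, y) \<Rightarrow> Qnum g1 g2 x y \<noteq> 0 \<and> Qden g1 g2 x y \<noteq> 0)"

type_synonym trip = "complex \<times> complex \<times> complex"

definition R12 :: "complex \<Rightarrow> complex \<Rightarrow> trip \<Rightarrow> trip" where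
  "R12 a b t = (case t of (x1, x2, x3) \<Rightarrow> (fst (Rh a b (x1, x2)), snd (Rh a b (x1, x2)), x3))"
definition R13 :: "complex \<Rightarrow> complex \<Rightarrow> trip \<Rightarrow> trip" where
  "R13 a b t = (case t of (x1, x2, x3) \<Rightarrow> (fst (Rh a b (x1, x3)), x2, snd (Rh a b (x1, x3))))"
definition R23 :: "complex \<Rightarrow> complex \<Rightarrow> trip \<Rightarrow> trip" where
  "R23 a b t = (case t of (x1, x2, x3) \<Rightarrow> (x1, fst (Rh a b (x2, x3)), snd (Rh a b (x2, x3))))"

definition ok12 :: "complex \<Rightarrow> complex \<Rightarrow> trip \<Rightarrow> bool" where
  "ok12 a b t = (case t of (x1, x2, x3) \<Rightarrow> Rok a b (x1, x2))"
definition ok13 :: "complex \<Rightarrow> complex \<Rightarrow> trip \<Rightarrow> bool" where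
  "ok13 a b t = (case t of (x1, x2, x3) \<Rightarrow> Rok a b (x1, x3))"
definition ok23 :: "complex \<Rightarrow> complex \<Rightarrow> trip \<Rightarrow> bool" where
  "ok23 a b t = (case t of (x1, x2, x3) \<Rightarrow> Rok a b (x2, x3))"

end

theory Submission imports Defs begin
lemma Rh_frac:
  assumes "Qnum a b x y = c*n/k1" "Qden a b x y = c*d/k2" "c \<noteq> 0" "n \<noteq> 0" "d \<noteq> 0" "k1 \<noteq> 0" "k2 \<noteq> 0"
  shows "Rh a b (x,y) = (y*(n*k2)/(d*k1), x*(d*k1)/(n*k2))"
proof -
  have "Qh a b x y = (n*k2)/(d*k1)" unfolding Qh_def assms(1,2) using assms(3-) by (simp add: field_simps)
  thus ?thesis using assms(3-) by (simp add: Rh_def)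
qed

lemma ok_frac:
  assumes "Rok a b (x,y)" "Qnum a b x y = c*n/k1" "Qden a b x y = c*d/k2"
  shows "c \<noteq> 0 \<and> n \<noteq> 0 \<and> d \<noteq> 0 \<and> k1 \<noteq> 0 \<and> k2 \<noteq> 0"
  using assms by (auto simp: Rok_def)

lemma YB:
  fixes g1 g2 g3 x1 x2 x3 :: complex
  assumes ok: "ok12 g1 g2 (x1,x2,x3)" "ok13 g1 g3 (R12 g1 g2 (x1,x2,x3))"
     "ok23 g2 g3 (R13 g1 g3 (R12 g1 g2 (x1,x2,x3)))"
     "ok23 g2 g3 (x1,x2,x3)" "ok13 g1 g3 (R23 g2 g3 (x1,x2,x3))"
     "ok12 g1 g2 (R13 g1 g3 (R23 g2 g3 (x1,x2,x3)))"
  shows "R23 g2 g3 (R13 g1 g3 (R12 g1 g2 (x1,x2,x3))) = R12 g1 g2 (R13 g1 g3 (R23 g2 g3 (x1,x2,x3)))"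
proof -
  define NA where "NA = Qnum g1 g2 x1 x2"
  define DA where "DA = Qden g1 g2 x1 x2"
  define ND where "ND = Qnum g2 g3 x2 x3"
  define DD where "DD = Qden g2 g3 x2 x3"
  define NB where "NB = (x1*x2^2*x3*g1*g2*g3 - x1*x2^2*x3*g2*g3 - x1*x2^2*g1*g2 + x1*x2^2*g2*g3 - x1*x2*x3*g1*g3 + x1*x2*x3*g2*g3 + x1*x2*g1 - x1*x2*g2*g3 - x2*x3*g2*g3 + x2*x3*g3 + x2*g2 - x2*g3 + g3 - 1)"
  define DB where "DB = (x1*x2^2*x3*g1*g2*g3 - x1*x2^2*x3*g1*g2 + x1*x2*x3*g1*g2 - x1*x2*x3*g1*g3 - x1*x2*g1*g2 + x1*x2*g1 + x2*x3*g1 - x2*x3*g2*g3 - x2*g1 + x2*g2 - x3*g1 + x3*g3 + g1 - 1)"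
  define NC where "NC = (x1*x2^2*x3*g1*g2*g3 - x1*x2^2*x3*g2*g3 - x1*x2*x3*g1*g3 + x1*x2*x3*g2*g3 - x1*x2*g1*g2 + x1*x2*g3 + x1*g1 - x1*g3 - x2*x3*g2*g3 + x2*x3*g3 + x2*g2 - x2*g3 + g3 - 1)"
  define DC where "DC = (x1*x2^2*x3*g1*g2*g3 - x1*x2^2*x3*g1*g2 + x1*x2*x3*g1*g2 - x1*x2*x3*g1*g3 - x1*x2*g1*g2 + x1*x2*g1 + x2^2*x3*g1*g2 - x2^2*x3*g2*g3 - x2*x3*g1*g2 + x2*x3*g3 - x2*g1 + x2*g2 + g1 - 1)"
  define cC where "cC = (g2-1)*(g3-1)*(1-g1*x1*x2)*(1-g2*x1*x2)"
  define cF where "cF = (g1-1)*(g2-1)*(1-g2*x2*x3)*(1-g3*x2*x3)"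
  have A1: "Qnum g1 g2 x1 x2 = 1*NA/1" "Qden g1 g2 x1 x2 = 1*DA/1" by (simp_all add: NA_def DA_def)
  from ok_frac[OF _ A1] ok(1) have nzA: "NA \<noteq> 0" "DA \<noteq> 0" by (auto simp: ok12_def)
  have S1: "R12 g1 g2 (x1,x2,x3) = (x2*NA/DA, x1*DA/NA, x3)"
    using Rh_frac[OF A1] nzA by (simp add: R12_def)
  have PB: "(1-g3)*DA + (g3-g1)*(x2*NA) + g3*(g1-1)*(x2*NA)*x3 = (g1-1)*NB"
    unfolding NA_def DA_def NB_def Qnum_def Qden_def by algebra
  have PBd: "(1-g1)*DA + (g1-g3)*x3*DA + g1*(g3-1)*(x2*NA)*x3 = (g1-1)*DB"
    unfolding NA_def DA_def DB_def Qnum_def Qden_def by algebra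
  have B1: "Qnum g1 g3 (x2*NA/DA) x3 = (g1-1)*NB/DA"
    unfolding PB[symmetric] Qnum_def using nzA by (simp add: field_simps)
  have B2: "Qden g1 g3 (x2*NA/DA) x3 = (g1-1)*DB/DA"
    unfolding PBd[symmetric] Qden_def using nzA by (simp add: field_simps)
  from ok_frac[OF _ B1 B2] ok(2) S1 have nzB: "g1-1 \<noteq> 0" "NB \<noteq> 0" "DB \<noteq> 0" by (auto simp: ok13_def)
  have S2: "R13 g1 g3 (R12 g1 g2 (x1,x2,x3)) = (x3*NB/DB, x1*DA/NA, x2*NA*DB/(DA*NB))"
    using Rh_frac[OF B1 B2] nzA nzB S1 by (simp add: R13_def field_simps)
  have PC: "(1-g3)*NA*NB + (g3-g2)*x1*DA*NB + g3*(g2-1)*x1*x2*DB*NA = cC*NC"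
    unfolding NA_def DA_def NB_def DB_def NC_def cC_def Qnum_def Qden_def by algebra
  have PCd: "(1-g2)*DA*NB + (g2-g3)*x2*NA*DB + g2*(g3-1)*x1*x2*DB*DA = cC*DC"
    unfolding NA_def DA_def NB_def DB_def DC_def cC_def Qnum_def Qden_def by algebra
  have C1: "Qnum g2 g3 (x1*DA/NA) (x2*NA*DB/(DA*NB)) = cC*NC/(NA*NB)"
    unfolding PC[symmetric] Qnum_def using nzA nzB by (simp add: field_simps)
  have C2: "Qden g2 g3 (x1*DA/NA) (x2*NA*DB/(DA*NB)) = cC*DC/(DA*NB)"
    unfolding PCd[symmetric] Qden_def using nzA nzB by (simp add: field_simps)
  from ok_frac[OF _ C1 C2] ok(3) S2 have nzC: "cC \<noteq> 0" "NC \<noteq> 0" "DC \<noteq> 0" by (auto simp: ok23_def)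
  have L: "R23 g2 g3 (R13 g1 g3 (R12 g1 g2 (x1,x2,x3))) = (x3*NB/DB, x2*DB*NC/(NB*DC), x1*DC/NC)"
    using Rh_frac[OF C1 C2] nzA nzB nzC S2 by (simp add: R23_def field_simps)
  have D1: "Qnum g2 g3 x2 x3 = 1*ND/1" "Qden g2 g3 x2 x3 = 1*DD/1" by (simp_all add: ND_def DD_def)
  from ok_frac[OF _ D1] ok(4) have nzD: "ND \<noteq> 0" "DD \<noteq> 0" by (auto simp: ok23_def)
  have T1: "R23 g2 g3 (x1,x2,x3) = (x1, x3*ND/DD, x2*DD/ND)"
    using Rh_frac[OF D1] nzD by (simp add: R23_def)
  have PE: "(1-g3)*ND + (g3-g1)*x1*ND + g3*(g1-1)*x1*(x2*DD) = (g3-1)*NC"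
    unfolding ND_def DD_def NC_def Qnum_def Qden_def by algebra
  have PEd: "(1-g1)*ND + (g1-g3)*(x2*DD) + g1*(g3-1)*x1*(x2*DD) = (g3-1)*DC"
    unfolding ND_def DD_def DC_def Qnum_def Qden_def by algebra
  have E1: "Qnum g1 g3 x1 (x2*DD/ND) = (g3-1)*NC/ND"
    unfolding PE[symmetric] Qnum_def using nzD by (simp add: field_simps)
  have E2: "Qden g1 g3 x1 (x2*DD/ND) = (g3-1)*DC/ND"
    unfolding PEd[symmetric] Qden_def using nzD by (simp add: field_simps)
  from ok_frac[OF _ E1 E2] ok(5) T1 have nzE: "g3-1 \<noteq> 0" "NC \<noteq> 0" "DC \<noteq> 0" by (auto simp: ok13_def)
  have T2: "R13 g1 g3 (R23 g2 g3 (x1,x2,x3)) = (x2*DD*NC/(ND*DC), x3*ND/DD, x1*DC/NC)"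
    using Rh_frac[OF E1 E2] nzD nzE T1 by (simp add: R13_def field_simps)
  have PF: "(1-g2)*(DC*ND)*DD + (g2-g1)*(x2*DD*NC)*DD + g2*(g1-1)*(x2*DD*NC)*(x3*ND) = cF*(DD*NB)"
    unfolding ND_def DD_def NC_def DC_def NB_def cF_def Qnum_def Qden_def by algebra
  have PFd: "(1-g1)*(DC*ND)*DD + (g1-g2)*(x3*ND)*(DC*ND) + g1*(g2-1)*(x2*DD*NC)*(x3*ND) = cF*(ND*DB)"
    unfolding ND_def DD_def NC_def DC_def DB_def cF_def Qnum_def Qden_def by algebra
  have F1: "Qnum g1 g2 (x2*DD*NC/(ND*DC)) (x3*ND/DD) = cF*(DD*NB)/(DC*ND*DD)"
    unfolding PF[symmetric] Qnum_def using nzD nzE by (simp add: field_simps)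
  have F2: "Qden g1 g2 (x2*DD*NC/(ND*DC)) (x3*ND/DD) = cF*(ND*DB)/(DC*ND*DD)"
    unfolding PFd[symmetric] Qden_def using nzD nzE by (simp add: field_simps)
  from ok_frac[OF _ F1 F2] ok(6) T2 have nzF: "cF \<noteq> 0" "NB \<noteq> 0" "DB \<noteq> 0" by (auto simp: ok12_def)
  have R: "R12 g1 g2 (R13 g1 g3 (R23 g2 g3 (x1,x2,x3))) = (x3*NB/DB, x2*DB*NC/(NB*DC), x1*DC/NC)"
    using Rh_frac[OF F1 F2] nzD nzE nzF T2 by (simp add: R12_def field_simps)
  show ?thesis using L R by simp
qed
lemma frac_aux: fixes m a b w c :: complex
  assumes "a \<noteq> 0" "b \<noteq> 0" "c \<noteq> 0" "w \<noteq> 0"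
  shows "(m/(a*b))/(w/(c*b)) = m*c/(w*a)"
  using assms by (simp add: field_simps)

lemma Qnum_gen: fixes c13 c14 c23 p13 p23 m w :: complex
  assumes "c13 \<noteq> 0" "c14 \<noteq> 0" "p13 \<noteq> 0" "p23 \<noteq> 0" "w \<noteq> 0"
  shows "Qnum (c23/c13) ((c14 - c13 + c23)/c14) (p13/p23) (m*p23/(w*p13)) =
    ((c13-c23)*c13*p23*w + ((c14 - c13 + c23)*c13 - c23*c14)*p13*w - (c14 - c13 + c23)*(c13-c23)*m*p23)/(c13*c14*p23*w)"
  using assms unfolding Qnum_def by (simp add: field_simps) algebra?

lemma Qden_gen: fixes c13 c14 c23 p13 p23 m w :: complex
  assumes "c13 \<noteq> 0" "c14 \<noteq> 0" "p13 \<noteq> 0" "p23 \<noteq> 0" "w \<noteq> 0"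
  shows "Qden (c23/c13) ((c14 - c13 + c23)/c14) (p13/p23) (m*p23/(w*p13)) =
    ((c13-c23)*c14*p13*w - ((c14 - c13 + c23)*c13 - c23*c14)*m*p23 - c23*(c13-c23)*m*p13)/(c13*c14*p13*w)"
  using assms unfolding Qden_def by (simp add: field_simps) algebra?

lemma fin_gen: fixes c13 c14 p13 p23 p14 p24 m m' w w' :: complex
  assumes "c13 \<noteq> 0" "c14 \<noteq> 0" "p13 \<noteq> 0" "p23 \<noteq> 0" "p14 \<noteq> 0" "p24 \<noteq> 0" "w \<noteq> 0" "w' \<noteq> 0" "m'*w = m*w'"
  shows "(m'*p24/(w'*p14), p14/p24) = (m*p23/(w*p13) * (p24*(c13*c14*p13*w)) / (p14*(c13*c14*p23*w)),
        p13/p23 * (p14*(c13*c14*p23*w)) / (p24*(c13*c14*p13*w)))"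
proof -
  have "m' = m*w'/w" using assms by (simp add: field_simps)
  thus ?thesis using assms by (simp add: field_simps)
qed

lemma KdV_alg:
  fixes q0 q1 q2 q3 q4 F13 F34 F23 F14 F24 a1 a2 a3 a4 :: complex
  assumes d12: "a1 \<noteq> a2" and d13: "a1 \<noteq> a3" and d14: "a1 \<noteq> a4" and d23: "a2 \<noteq> a3"
    and d24: "a2 \<noteq> a4" and d34: "a3 \<noteq> a4"
    and e13: "(F13 - q0)*(q1 - q3) = a1 - a3" and e34: "(F34 - q0)*(q3 - q4) = a3 - a4"
    and e23: "(F23 - q0)*(q2 - q3) = a2 - a3" and e14: "(F14 - q0)*(q1 - q4) = a1 - a4"
    and e24: "(F24 - q0)*(q2 - q4) = a2 - a4"
    and g1: "F23 \<noteq> F34" and g2: "F24 \<noteq> F34"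
    and ok: "Rok ((a2 - a3)/(a1 - a3)) ((a2 - a4)/(a1 - a4)) ((q1 - q3)/(q2 - q3), (F13 - F34)/(F23 - F34))"
  shows "((F14 - F34)/(F24 - F34), (q1 - q4)/(q2 - q4)) =
     Rh ((a2 - a3)/(a1 - a3)) ((a2 - a4)/(a1 - a4)) ((q1 - q3)/(q2 - q3), (F13 - F34)/(F23 - F34))"
proof -
  have p13: "q1 - q3 \<noteq> 0" using e13 d13 by auto
  have p34: "q3 - q4 \<noteq> 0" using e34 d34 by auto
  have p23: "q2 - q3 \<noteq> 0" using e23 d23 by auto
  have p14: "q1 - q4 \<noteq> 0" using e14 d14 by auto
  have p24: "q2 - q4 \<noteq> 0" using e24 d24 by auto
  have A: "a1 - a3 \<noteq> 0" "a1 - a4 \<noteq> 0" "a1 - a2 \<noteq> 0" "a3 - a4 \<noteq> 0" "a2 - a3 \<noteq> 0" "a2 - a4 \<noteq> 0"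
    using d12 d13 d14 d23 d24 d34 by auto
  have f13: "F13 = q0 + (a1-a3)/(q1-q3)" using e13 p13 by (simp add: field_simps)
  have f34: "F34 = q0 + (a3-a4)/(q3-q4)" using e34 p34 by (simp add: field_simps)
  have f23: "F23 = q0 + (a2-a3)/(q2-q3)" using e23 p23 by (simp add: field_simps)
  have f14: "F14 = q0 + (a1-a4)/(q1-q4)" using e14 p14 by (simp add: field_simps)
  have f24: "F24 = q0 + (a2-a4)/(q2-q4)" using e24 p24 by (simp add: field_simps)
  define W where "W = (a2-a3)*(q3-q4) - (a3-a4)*(q2-q3)"
  define W' where "W' = (a2-a4)*(q3-q4) - (a3-a4)*(q2-q4)"
  define M where "M = (a1-a3)*(q3-q4) - (a3-a4)*(q1-q3)"
  define M' where "M' = (a1-a4)*(q3-q4) - (a3-a4)*(q1-q4)"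
  define K where "K = q1*(a2-a3) - q2*(a1-a3) + q3*(a1-a2)"
  have d2334: "F23 - F34 = W/((q2-q3)*(q3-q4))" unfolding f23 f34 W_def using p23 p34 by (simp add: field_simps)
  have d2434: "F24 - F34 = W'/((q2-q4)*(q3-q4))" unfolding f24 f34 W'_def using p24 p34 by (simp add: field_simps)
  have d1334: "F13 - F34 = M/((q1-q3)*(q3-q4))" unfolding f13 f34 M_def using p13 p34 by (simp add: field_simps)
  have d1434: "F14 - F34 = M'/((q1-q4)*(q3-q4))" unfolding f14 f34 M'_def using p14 p34 by (simp add: field_simps)
  have W: "W \<noteq> 0" using g1 d2334 by auto
  have W': "W' \<noteq> 0" using g2 d2434 by auto
  have Y: "(F13 - F34)/(F23 - F34) = M*(q2-q3)/(W*(q1-q3))"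
    unfolding d1334 d2334 by (rule frac_aux[OF p13 p34 p23 W])
  have U: "(F14 - F34)/(F24 - F34) = M'*(q2-q4)/(W'*(q1-q4))"
    unfolding d1434 d2434 by (rule frac_aux[OF p14 p34 p24 W'])
  have PN: "(a1-a2)*(a1-a3)*(q2-q3)*W + ((a2-a4)*(a1-a3)-(a2-a3)*(a1-a4))*(q1-q3)*W
      - (a2-a4)*(a1-a2)*M*(q2-q3) = (a1-a2)*(a3-a4)*K*(q2-q4)"
    unfolding W_def M_def K_def by algebra
  have PD: "(a1-a2)*(a1-a4)*(q1-q3)*W - ((a2-a4)*(a1-a3)-(a2-a3)*(a1-a4))*M*(q2-q3)
      - (a2-a3)*(a1-a2)*M*(q1-q3) = (a1-a2)*(a3-a4)*K*(q1-q4)"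
    unfolding W_def M_def K_def by algebra
  have QN: "Qnum ((a2 - a3)/(a1 - a3)) ((a2 - a4)/(a1 - a4)) ((q1 - q3)/(q2 - q3)) (M*(q2-q3)/(W*(q1-q3)))
      = ((a1-a2)*(a3-a4)*K)*(q2-q4)/((a1-a3)*(a1-a4)*(q2-q3)*W)"
  proof -
    have e: "a2 - a4 = (a1-a4) - (a1-a3) + (a2-a3)" "a1 - a2 = (a1-a3) - (a2-a3)" by simp_all
    show ?thesis unfolding PN[symmetric] unfolding e Qnum_gen[OF A(1,2) p13 p23 W] ..
  qed
  have QD: "Qden ((a2 - a3)/(a1 - a3)) ((a2 - a4)/(a1 - a4)) ((q1 - q3)/(q2 - q3)) (M*(q2-q3)/(W*(q1-q3)))
      = ((a1-a2)*(a3-a4)*K)*(q1-q4)/((a1-a3)*(a1-a4)*(q1-q3)*W)"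
  proof -
    have e: "a2 - a4 = (a1-a4) - (a1-a3) + (a2-a3)" "a1 - a2 = (a1-a3) - (a2-a3)" by simp_all
    show ?thesis unfolding PD[symmetric] unfolding e Qden_gen[OF A(1,2) p13 p23 W] ..
  qed
  have K: "(a1-a2)*(a3-a4)*K \<noteq> 0" using ok QN unfolding Y by (auto simp: Rok_def)
  have R: "Rh ((a2 - a3)/(a1 - a3)) ((a2 - a4)/(a1 - a4)) ((q1 - q3)/(q2 - q3), (M*(q2-q3)/(W*(q1-q3))))
     = (M*(q2-q3)/(W*(q1-q3)) * ((q2-q4)*((a1-a3)*(a1-a4)*(q1-q3)*W)) / ((q1-q4)*((a1-a3)*(a1-a4)*(q2-q3)*W)),
        (q1 - q3)/(q2 - q3) * ((q1-q4)*((a1-a3)*(a1-a4)*(q2-q3)*W)) / ((q2-q4)*((a1-a3)*(a1-a4)*(q1-q3)*W)))"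
    by (rule Rh_frac[OF QN QD K]) (use A p13 p23 p14 p24 W in auto)
  have PM: "M'*W = M*W'" unfolding M_def M'_def W_def W'_def by algebra
  show ?thesis unfolding Y U R by (rule fin_gen[OF A(1,2) p13 p23 p14 p24 W W' PM])
qed
lemma par_sh: "i \<in> {1..4} \<Longrightarrow> par (sh n i) = - par n"
  unfolding par_def sh_def by (auto simp: even_add)

lemma inv1: "Xq (gen1 e h) n = Xq h n \<and> Yq (gen1 e h) n = Yq h n \<and> Uq (gen1 e h) n = Uq h n \<and> Vq (gen1 e h) n = Vq h n"
  by (simp add: gen1_def Xq_def Yq_def Uq_def Vq_def)

lemma inv3: "Xq (gen3 e h) n = Xq h n \<and> Yq (gen3 e h) n = Yq h n \<and> Uq (gen3 e h) n = Uq h n \<and> Vq (gen3 e h) n = Vq h n"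
  by (simp add: gen3_def Xq_def Yq_def Uq_def Vq_def par_sh)

lemma cancelE: "(E::complex) \<noteq> 0 \<Longrightarrow> (a*E - b*E)/(c*E - d*E) = (a-b)/(c-d)"
  by (simp add: left_diff_distrib[symmetric])

lemma inv2: "Xq (gen2 e h) n = Xq h n \<and> Yq (gen2 e h) n = Yq h n \<and> Uq (gen2 e h) n = Uq h n \<and> Vq (gen2 e h) n = Vq h n"
  by (simp add: gen2_def Xq_def Yq_def Uq_def Vq_def par_sh cancelE)

lemma symG_inv: "T \<in> symG \<Longrightarrow> Xq (T f) n = Xq f n \<and> Yq (T f) n = Yq f n \<and> Uq (T f) n = Uq f n \<and> Vq (T f) n = Vq f n"
proof (induction T arbitrary: n rule: symG.induct)
  case symG_id then show ?case by simp
next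
  case (symG_1 g \<epsilon>) then show ?case using inv1[of \<epsilon> "g f" n] by simp
next
  case (symG_2 g \<epsilon>) then show ?case using inv2[of \<epsilon> "g f" n] by simp
next
  case (symG_3 g \<epsilon>) then show ?case using inv3[of \<epsilon> "g f" n] by simp
qed
theorem mainTheorem2:
  fixes \<alpha> :: "nat \<Rightarrow> complex" and f :: "pt \<Rightarrow> complex"
  assumes distinct: "inj_on \<alpha> {1..4}"
    and sol: "dpKdV \<alpha> f"
    and generic: "\<forall>n\<in>Z4. f (sh n 2) \<noteq> f (sh n 3) \<and> f (sh n 2) \<noteq> f (sh n 4)
        \<and> f (sh (sh n 2) 3) \<noteq> f (sh (sh n 3) 4) \<and> f (sh (sh n 2) 4) \<noteq> f (sh (sh n 3) 4)
        \<and> Rok ((\<alpha> 2 - \<alpha> 3) / (\<alpha> 1 - \<alpha> 3)) ((\<alpha> 2 - \<alpha> 4) / (\<alpha> 1 - \<alpha> 4)) (Xq f n, Yq f n)"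
  shows "(\<forall>T\<in>symG. \<forall>n\<in>Z4. Xq (T f) n = Xq f n \<and> Yq (T f) n = Yq f n
            \<and> Uq (T f) n = Uq f n \<and> Vq (T f) n = Vq f n)
    \<and> (\<forall>n\<in>Z4. (Uq f n, Vq f n) =
          Rh ((\<alpha> 2 - \<alpha> 3) / (\<alpha> 1 - \<alpha> 3)) ((\<alpha> 2 - \<alpha> 4) / (\<alpha> 1 - \<alpha> 4)) (Xq f n, Yq f n))
    \<and> (\<forall>g1 g2 g3 t.
          ok12 g1 g2 t \<and> ok13 g1 g3 (R12 g1 g2 t) \<and> ok23 g2 g3 (R13 g1 g3 (R12 g1 g2 t))
          \<and> ok23 g2 g3 t \<and> ok13 g1 g3 (R23 g2 g3 t) \<and> ok12 g1 g2 (R13 g1 g3 (R23 g2 g3 t))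
          \<longrightarrow> R23 g2 g3 (R13 g1 g3 (R12 g1 g2 t)) = R12 g1 g2 (R13 g1 g3 (R23 g2 g3 t)))"
proof (intro conjI)
  show "\<forall>T\<in>symG. \<forall>n\<in>Z4. Xq (T f) n = Xq f n \<and> Yq (T f) n = Yq f n
            \<and> Uq (T f) n = Uq f n \<and> Vq (T f) n = Vq f n"
    using symG_inv by blast
next
  show "\<forall>g1 g2 g3 t.
          ok12 g1 g2 t \<and> ok13 g1 g3 (R12 g1 g2 t) \<and> ok23 g2 g3 (R13 g1 g3 (R12 g1 g2 t))
          \<and> ok23 g2 g3 t \<and> ok13 g1 g3 (R23 g2 g3 t) \<and> ok12 g1 g2 (R13 g1 g3 (R23 g2 g3 t))
          \<longrightarrow> R23 g2 g3 (R13 g1 g3 (R12 g1 g2 t)) = R12 g1 g2 (R13 g1 g3 (R23 g2 g3 t))"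
    using YB by (metis prod_cases3)
next
  show "\<forall>n\<in>Z4. (Uq f n, Vq f n) =
          Rh ((\<alpha> 2 - \<alpha> 3) / (\<alpha> 1 - \<alpha> 3)) ((\<alpha> 2 - \<alpha> 4) / (\<alpha> 1 - \<alpha> 4)) (Xq f n, Yq f n)"
  proof
    fix n assume n: "n \<in> Z4"
    have E: "\<And>i j. 1 \<le> i \<Longrightarrow> i < j \<Longrightarrow> j \<le> 4 \<Longrightarrow>
      (f (sh (sh n i) j) - f n) * (f (sh n i) - f (sh n j)) = \<alpha> i - \<alpha> j"
      using sol n unfolding dpKdV_def by blast
    have D: "\<And>i j. i \<in> {1..4} \<Longrightarrow> j \<in> {1..4} \<Longrightarrow> i \<noteq> j \<Longrightarrow> \<alpha> i \<noteq> \<alpha> j"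
      using distinct by (metis inj_on_eq_iff)
    have G: "f (sh (sh n 2) 3) \<noteq> f (sh (sh n 3) 4)" "f (sh (sh n 2) 4) \<noteq> f (sh (sh n 3) 4)"
      "Rok ((\<alpha> 2 - \<alpha> 3) / (\<alpha> 1 - \<alpha> 3)) ((\<alpha> 2 - \<alpha> 4) / (\<alpha> 1 - \<alpha> 4)) (Xq f n, Yq f n)"
      using generic n by auto
    show "(Uq f n, Vq f n) =
          Rh ((\<alpha> 2 - \<alpha> 3) / (\<alpha> 1 - \<alpha> 3)) ((\<alpha> 2 - \<alpha> 4) / (\<alpha> 1 - \<alpha> 4)) (Xq f n, Yq f n)"
      unfolding Uq_def Vq_def Xq_def Yq_def
      apply (rule KdV_alg[where ?q0.0="f n"])
      using D[of 1 2] D[of 1 3] D[of 1 4] D[of 2 3] D[of 2 4] D[of 3 4]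
        E[of 1 3] E[of 3 4] E[of 2 3] E[of 1 4] E[of 2 4] G
      by (simp_all add: Xq_def Yq_def)
  qed
qed
end
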